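(* Let $F_2$ be the free non-Abelian group on two generators $x,y$, and equip $\mathbb{Z}/2\wr F_2$ with the word metric with respect to $\{u,x,y\}$, $u$ the nontrivial element of $\mathbb{Z}/2$. For every $n\ge1$ the $n$-dimensional control function of $\mathbb{Z}/2\wr F_2$ is weakly equivalent to $t\mapsto 2^t$; that is, there is an $n$-dimensional control function of $\mathbb{Z}/2\wr F_2$ weakly dominated by $2^t$, and every $n$-dimensional control function of $\mathbb{Z}/2\wr F_2$ weakly dominates $2^t$.
   Context: Wreath product: $H\wr G$ is the set of pairs $(f,g)$, $f:G\to H$ finitely supported, with $(f_1,g_1)(f_2,g_2)=(f_1\cdot(g_1f_2),g_1g_2)$ where $(gf)(\gamma)=f(g^{-1}\gamma)$; $g\in G$ identified with $(1,g)$ and $a\in H$ with $(f_a,1)$, $f_a(1)=a$, $f_a(\gamma)=1$ otherwise. For a metric space $X$, $r>0$: $r$-components of $Y\subseteq X$ are classes of points joined by sequences in $Y$ with consecutive distances $<r$. An $m$-dimensional control function of $X$ is $D:\mathbb{R}_+\to\mathbb{R}_+\cup\{\infty\}$ such that for each $r>0$ there is a cover $\{X_0,\dots,X_m\}$ of $X$ such that every open ball $B(x,r)$ lies in some $X_i$ and every $r$-component of each $X_i$ has diameter at most $D(r)$. $f$ weakly dominates $g$ if there are $\lambda\ge1$, $C\ge0$ with $g(t)\le\lambda f(\lambda t+C)+C$ for all $t\ge0$; weakly equivalent means each weakly dominates the other. *)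

theory Defs
  imports "HOL-Analysis.Analysis" "HOL-Library.Extended_Nonnegative_Real"
begin

datatype gen = GX | GY

text \<open>A letter is a generator together with a flag: True means the inverse letter.\<close>
type_synonym letter = "gen \<times> bool"

definition linv :: "letter \<Rightarrow> letter" where
  "linv l = (fst l, \<not> snd l)"

fun red_cons :: "letter \<Rightarrow> letter list \<Rightarrow> letter list" where
  "red_cons a [] = [a]"
| "red_cons a (b # w) = (if b = linv a then w else a # b # w)"

definition reduce :: "letter list \<Rightarrow> letter list" where
  "reduce w = foldr red_cons w []"

fun reduced :: "letter list \<Rightarrow> bool" where
  "reduced [] = True"
| "reduced [a] = True"
| "reduced (a # b # w) = (b \<noteq> linv a \<and> reduced (b # w))"

definition F2 :: "letter list set" where
  "F2 = {w. reduced w}"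

definition fmult :: "letter list \<Rightarrow> letter list \<Rightarrow> letter list" where
  "fmult v w = reduce (v @ w)"

definition finv :: "letter list \<Rightarrow> letter list" where
  "finv w = rev (map linv w)"

text \<open>A finitely supported function F_2 \<Rightarrow> Z/2 is represented by its (finite) support;
  pointwise addition in Z/2 is symmetric difference, and (g f)(\<gamma>) = f(g^{-1}\<gamma>)
  corresponds to translating the support by g.\<close>
type_synonym lelem = "letter list set \<times> letter list"

definition lamp_carrier :: "lelem set" where
  "lamp_carrier = {(A, g). finite A \<and> A \<subseteq> F2 \<and> g \<in> F2}"

definition lmult :: "lelem \<Rightarrow> lelem \<Rightarrow> lelem" where
  "lmult a b = (let A1 = fst a; g1 = snd a; B = fmult g1 ` fst b
                in ((A1 - B) \<union> (B - A1), fmult g1 (snd b)))"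

definition lone :: lelem where
  "lone = ({}, [])"

definition linvw :: "lelem \<Rightarrow> lelem" where
  "linvw a = (fmult (finv (snd a)) ` fst a, finv (snd a))"

definition gen_u :: lelem where "gen_u = ({[]}, [])"
definition gen_x :: lelem where "gen_x = ({}, [(GX, False)])"
definition gen_y :: lelem where "gen_y = ({}, [(GY, False)])"

definition lgens :: "lelem set" where
  "lgens = {gen_u, gen_x, gen_y}"

definition symgens :: "lelem set" where
  "symgens = lgens \<union> linvw ` lgens"

definition lprod :: "lelem list \<Rightarrow> lelem" where
  "lprod ws = foldr lmult ws lone"

definition wordlen :: "lelem \<Rightarrow> nat" where
  "wordlen a = (LEAST n. \<exists>ws. length ws = n \<and> set ws \<subseteq> symgens \<and> lprod ws = a)"

definition ldist :: "lelem \<Rightarrow> lelem \<Rightarrow> real" where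
  "ldist a b = real (wordlen (lmult (linvw a) b))"

inductive rconn :: "'a set \<Rightarrow> ('a \<Rightarrow> 'a \<Rightarrow> real) \<Rightarrow> real \<Rightarrow> 'a \<Rightarrow> 'a \<Rightarrow> bool"
  for Y d r where
  refl: "p \<in> Y \<Longrightarrow> rconn Y d r p p"
| step: "rconn Y d r p q \<Longrightarrow> q' \<in> Y \<Longrightarrow> d q q' < r \<Longrightarrow> rconn Y d r p q'"

text \<open>D is an m-dimensional control function of the metric space (X, d).
  Diameter of an r-component at most D r is expressed pointwise.\<close>
definition control_fn :: "'a set \<Rightarrow> ('a \<Rightarrow> 'a \<Rightarrow> real) \<Rightarrow> nat \<Rightarrow> (real \<Rightarrow> ennreal) \<Rightarrow> bool" where
  "control_fn X d m D \<longleftrightarrow>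
     (\<forall>r>0. \<exists>U :: nat \<Rightarrow> 'a set.
        (\<forall>i\<le>m. U i \<subseteq> X) \<and> (\<Union>i\<le>m. U i) = X \<and>
        (\<forall>x\<in>X. \<exists>i\<le>m. {y\<in>X. d x y < r} \<subseteq> U i) \<and>
        (\<forall>i\<le>m. \<forall>p q. rconn (U i) d r p q \<longrightarrow> ennreal (d p q) \<le> D r))"

definition weakly_dominates :: "(real \<Rightarrow> ennreal) \<Rightarrow> (real \<Rightarrow> ennreal) \<Rightarrow> bool" where
  "weakly_dominates f g \<longleftrightarrow>
     (\<exists>L\<ge>1. \<exists>C\<ge>0. \<forall>t\<ge>0. g t \<le> ennreal L * f (L * t + C) + ennreal C)"

end

theory Submission
  imports Defs
begin

lemma linv_linv[simp]: "linv (linv a) = a"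
  by (simp add: linv_def)

lemma linv_neq[simp]: "linv a \<noteq> a"
  by (cases a) (simp add: linv_def)

lemma len_red_cons: "length (red_cons a w) \<le> Suc (length w)"
  by (cases w) auto

lemma reduced_tl: "reduced (a # w) \<Longrightarrow> reduced w"
  by (cases w) auto

lemma reduced_red_cons: "reduced w \<Longrightarrow> reduced (red_cons a w)"
  by (cases w) (auto dest: reduced_tl)

lemma reduce_Nil[simp]: "reduce [] = []"
  by (simp add: reduce_def)

lemma reduce_Cons: "reduce (a # w) = red_cons a (reduce w)"
  by (simp add: reduce_def)

lemma reduced_reduce[simp]: "reduced (reduce w)"
  by (induction w) (auto simp: reduce_Cons reduced_red_cons)

lemma reduce_reduced: "reduced w \<Longrightarrow> reduce w = w"
proof (induction w)
  case Nil then show ?case by simp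
next
  case (Cons a w)
  then have "reduce w = w" using reduced_tl by blast
  then show ?case using Cons.prems by (cases w) (auto simp: reduce_Cons)
qed

lemma reduce_reduce[simp]: "reduce (reduce w) = reduce w"
  by (simp add: reduce_reduced)

lemma len_reduce: "length (reduce w) \<le> length w"
  by (induction w) (auto simp: reduce_Cons intro: le_trans[OF len_red_cons])

lemma reduce_append: "reduce (u @ v) = foldr red_cons u (reduce v)"
  by (simp add: reduce_def)

lemma reduce_append_reduce[simp]: "reduce (u @ reduce v) = reduce (u @ v)"
  by (simp add: reduce_append)

lemma red_cons_cancel: "reduced z \<Longrightarrow> red_cons a (red_cons (linv a) z) = z"
proof (cases z)
  case Nil then show ?thesis by simp
next
  case (Cons b z')
  assume r: "reduced z"
  show ?thesis
  proof (cases "b = a")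
    case True
    then show ?thesis using Cons r by (cases z') auto
  next
    case False
    then have "b \<noteq> linv (linv a)" by simp
    then show ?thesis using Cons by auto
  qed
qed

lemma finv_Cons[simp]: "finv (a # w) = finv w @ [linv a]"
  by (simp add: finv_def)

lemma finv_Nil[simp]: "finv [] = []"
  by (simp add: finv_def)

lemma finv_append[simp]: "finv (u @ v) = finv v @ finv u"
  by (simp add: finv_def)

lemma finv_finv[simp]: "finv (finv w) = w"
  by (simp add: finv_def rev_map comp_def)

lemma length_finv[simp]: "length (finv w) = length w"
  by (simp add: finv_def)

lemma cancel: "reduce (w @ finv w @ v) = reduce v"
proof (induction w arbitrary: v)
  case Nil then show ?case by simp
next
  case (Cons a w)
  have "reduce ((a # w) @ finv (a # w) @ v) = red_cons a (reduce (w @ finv w @ (linv a # v)))"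
    by (simp add: reduce_Cons)
  also have "\<dots> = red_cons a (reduce (linv a # v))" using Cons by simp
  also have "\<dots> = reduce v" by (simp add: reduce_Cons red_cons_cancel)
  finally show ?case .
qed

lemma cancel': "reduce (finv w @ w @ v) = reduce v"
  using cancel[of "finv w" v] by simp

lemma fmult_Nil[simp]: "w \<in> F2 \<Longrightarrow> fmult [] w = w"
  by (simp add: fmult_def F2_def reduce_reduced)

lemma fmult_F2[simp]: "fmult u v \<in> F2"
  by (simp add: fmult_def F2_def)

lemma fmult_inv_left: "w \<in> F2 \<Longrightarrow> fmult g (fmult (finv g) w) = w"
  by (simp add: fmult_def F2_def cancel reduce_reduced)

lemma fmult_inv_left': "w \<in> F2 \<Longrightarrow> fmult (finv g) (fmult g w) = w"
  by (simp add: fmult_def F2_def cancel' reduce_reduced)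

lemma inj_fmult: "inj_on (fmult g) F2"
  by (metis fmult_inv_left' inj_onI)

lemma foldr_red_cons_struct:
  assumes "reduced g"
  shows "\<exists>i j. foldr red_cons g z = take i g @ drop j z \<and> j \<le> length z \<and> length g \<le> i + j"
  using assms
proof (induction g)
  case Nil
  then show ?case by (intro exI[of _ 0]) auto
next
  case (Cons a g)
  from Cons.prems have rg: "reduced g" using reduced_tl by blast
  from Cons.IH[OF rg] obtain i j where ij: "foldr red_cons g z = take i g @ drop j z"
    "j \<le> length z" "length g \<le> i + j" by blast
  show ?case
  proof (cases "take i g @ drop j z")
    case Nil
    then show ?thesis using ij
      by (intro exI[of _ "Suc i"] exI[of _ j]) auto
  next
    case (Cons b rest)
    show ?thesis
    proof (cases "b = linv a")
      case False
      then show ?thesis using ij Cons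
        by (intro exI[of _ "Suc i"] exI[of _ j]) auto
    next
      case True
      have tk: "take i g = []"
      proof (rule ccontr)
        assume "take i g \<noteq> []"
        then obtain g' where g: "g = b # g'" "i > 0" using Cons
          by (cases g; cases i) auto
        then show False using Cons.prems True by auto
      qed
      then have dz: "drop j z = b # rest" using Cons by (metis append_Nil)
      then have "drop (Suc j) z = rest" by (metis drop_Suc tl_drop list.sel(3))
      moreover have "Suc j \<le> length z" using dz
        by (metis Suc_leI drop_eq_Nil2 leI list.distinct(1))
      moreover have "length (a # g) \<le> 0 + Suc j" using tk ij
        by (cases i) auto
      ultimately show ?thesis using ij Cons True
        by (intro exI[of _ 0] exI[of _ "Suc j"]) simp
    qed
  qed
qed

lemma tree_step:
  assumes "g \<in> F2" "g' \<in> F2"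
  defines "h \<equiv> fmult (finv g) g'"
  shows "take (length g - length h) g' = take (length g - length h) g"
    "length g' \<le> length g + length h" "length g \<le> length g' + length h"
proof -
  have rg: "reduced g" using assms by (simp add: F2_def)
  have "g' = fmult g h" unfolding h_def using fmult_inv_left assms by simp
  also have "\<dots> = foldr red_cons g h"
  proof -
    have "reduce h = h" unfolding h_def fmult_def by simp
    then show ?thesis by (simp add: fmult_def reduce_append)
  qed
  finally have e: "g' = foldr red_cons g h" .
  obtain i j where ij: "g' = take i g @ drop j h" "j \<le> length h" "length g \<le> i + j"
    using foldr_red_cons_struct[OF rg, of h] e by metis
  show "take (length g - length h) g' = take (length g - length h) g"
  proof -
    have "length g - length h \<le> i" using ij by arith
    then show ?thesis using ij by (simp add: take_append min_def)
  qed
  show "length g' \<le> length g + length h" using ij by simp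
  have lg': "length g' = min i (length g) + (length h - j)" using ij by simp
  show "length g \<le> length g' + length h" using ij lg' by arith
qed

definition lg :: "letter \<Rightarrow> lelem" where "lg l = ({}, [l])"

lemma linvw_gen_u: "linvw gen_u = gen_u"
  by (simp add: linvw_def gen_u_def fmult_def)

lemma symgens_eq: "symgens = {gen_u, lg (GX,False), lg (GY,False), lg (GX,True), lg (GY,True)}"
  by (auto simp: symgens_def lgens_def linvw_def gen_u_def gen_x_def gen_y_def lg_def fmult_def finv_def linv_def)

lemma lg_sym: "lg l \<in> symgens"
  by (cases l; cases "fst l"; cases "snd l") (auto simp: symgens_eq)

lemma gen_u_sym: "gen_u \<in> symgens"
  by (simp add: symgens_eq)

lemma lmult_lg: "lmult (lg l) (A, h) = ((\<lambda>a. reduce (l # a)) ` A, reduce (l # h))"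
  by (auto simp: lmult_def lg_def fmult_def)

lemma foldr_lg: "A \<subseteq> F2 \<Longrightarrow> h \<in> F2 \<Longrightarrow> foldr lmult (map lg w) (A, h) = ((\<lambda>a. reduce (w @ a)) ` A, reduce (w @ h))"
proof (induction w)
  case Nil
  then show ?case by (auto simp: F2_def reduce_reduced image_iff) (metis F2_def mem_Collect_eq reduce_reduced subset_eq)
next
  case (Cons l w)
  have "foldr lmult (map lg (l # w)) (A, h) = lmult (lg l) ((\<lambda>a. reduce (w @ a)) ` A, reduce (w @ h))"
    using Cons by simp
  also have "\<dots> = ((\<lambda>a. reduce ([l] @ reduce (w @ a))) ` A, reduce ([l] @ reduce (w @ h)))"
    by (simp add: lmult_lg image_image)
  also have "\<dots> = ((\<lambda>a. reduce ((l # w) @ a)) ` A, reduce ((l # w) @ h))"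
    by (simp only: reduce_append_reduce) simp
  finally show ?case .
qed

definition wsingle :: "letter list \<Rightarrow> lelem list" where
  "wsingle s = map lg s @ gen_u # map lg (finv s)"

lemma length_wsingle: "length (wsingle s) = 2 * length s + 1"
  by (simp add: wsingle_def)

lemma set_wsingle: "set (wsingle s) \<subseteq> symgens"
  by (auto simp: wsingle_def lg_sym gen_u_sym)

lemma symdiff_image:
  assumes "inj_on f (X \<union> Y)"
  shows "f ` ((X - Y) \<union> (Y - X)) = (f ` X - f ` Y) \<union> (f ` Y - f ` X)"
  using assms unfolding inj_on_def by blast

lemma foldr_wsingle:
  assumes "A \<subseteq> F2" "h \<in> F2" "s \<in> F2"
  shows "foldr lmult (wsingle s) (A, h) = (({s} - A) \<union> (A - {s}), h)"
proof -
  define A1 where "A1 = (\<lambda>a. reduce (finv s @ a)) ` A"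
  define h1 where "h1 = reduce (finv s @ h)"
  have A1F: "A1 \<subseteq> F2" by (auto simp: A1_def F2_def)
  have h1F: "h1 \<in> F2" by (simp add: h1_def F2_def)
  have "foldr lmult (wsingle s) (A, h) = foldr lmult (map lg s) (lmult gen_u (A1, h1))"
    using assms by (simp add: wsingle_def foldr_lg A1_def h1_def)
  also have "lmult gen_u (A1, h1) = (({[]} - A1) \<union> (A1 - {[]}), h1)"
  proof -
    have "fmult [] ` A1 = A1" using A1F by (auto simp: image_iff) (metis fmult_Nil subsetD)+
    then show ?thesis using h1F by (simp add: lmult_def gen_u_def Let_def)
  qed
  also have "foldr lmult (map lg s) (({[]} - A1) \<union> (A1 - {[]}), h1) =
     ((\<lambda>a. reduce (s @ a)) ` (({[]} - A1) \<union> (A1 - {[]})), reduce (s @ h1))"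
    using A1F h1F by (intro foldr_lg) (auto simp: F2_def)
  also have "reduce (s @ h1) = h"
    using assms by (simp add: h1_def cancel F2_def reduce_reduced)
  also have "(\<lambda>a. reduce (s @ a)) ` (({[]} - A1) \<union> (A1 - {[]})) = ({s} - A) \<union> (A - {s})"
  proof -
    let ?f = "\<lambda>a. reduce (s @ a)"
    have inj: "inj_on ?f F2"
      using inj_fmult[of s] unfolding fmult_def[abs_def] by simp
    have "{[]} \<union> A1 \<subseteq> F2" using A1F by (auto simp: F2_def)
    then have inj2: "inj_on ?f ({[]} \<union> A1)" using inj inj_on_subset by blast
    have "?f ` {[]} = {s}" using assms by (simp add: F2_def reduce_reduced)
    moreover have "?f ` A1 = A"
    proof -
      have "?f ` A1 = (\<lambda>a. reduce (s @ finv s @ a)) ` A"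
        by (simp add: A1_def image_image)
      also have "\<dots> = (\<lambda>a. a) ` A"
        using assms(1) by (intro image_cong) (auto simp: cancel F2_def reduce_reduced)
      finally show ?thesis by simp
    qed
    ultimately show ?thesis using symdiff_image[OF inj2] by simp
  qed
  finally show ?thesis .
qed

lemma lprod_append: "lprod (xs @ ys) = foldr lmult xs (lprod ys)"
  by (simp add: lprod_def)

lemma word_exists:
  assumes "finite F" "F \<subseteq> F2" "h \<in> F2"
  shows "\<exists>ws. set ws \<subseteq> symgens \<and> lprod ws = (F, h) \<and>
             length ws \<le> (\<Sum>s\<in>F. 2 * length s + 1) + length h"
  using assms
proof (induction F rule: finite_induct)
  case empty
  have "lprod (map lg h) = ({}, h)"
    using empty by (simp add: lprod_def lone_def foldr_lg F2_def reduce_reduced)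
  then show ?case using lg_sym by (intro exI[of _ "map lg h"]) auto
next
  case (insert s F)
  then obtain ws where ws: "set ws \<subseteq> symgens" "lprod ws = (F, h)"
     "length ws \<le> (\<Sum>s\<in>F. 2 * length s + 1) + length h" by auto
  have "lprod (wsingle s @ ws) = (insert s F, h)"
    using insert ws by (auto simp: lprod_append foldr_wsingle)
  moreover have "set (wsingle s @ ws) \<subseteq> symgens" using ws set_wsingle by auto
  moreover have "length (wsingle s @ ws) \<le> (\<Sum>s\<in>insert s F. 2 * length s + 1) + length h"
    using ws insert by (simp add: length_wsingle)
  ultimately show ?case by blast
qed

lemma symgens_shape: "a \<in> symgens \<Longrightarrow> fst a \<subseteq> {[]} \<and> length (snd a) \<le> 1"
  by (auto simp: symgens_eq gen_u_def lg_def)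

lemma word_bounds:
  assumes "set ws \<subseteq> symgens" "lprod ws = (E, h)"
  shows "finite E \<and> card E \<le> length ws \<and> length h \<le> length ws \<and> (\<forall>e\<in>E. length e \<le> length ws)"
  using assms
proof (induction ws arbitrary: E h)
  case Nil
  then show ?case by (simp add: lprod_def lone_def)
next
  case (Cons a ws)
  obtain E0 h0 where p0: "lprod ws = (E0, h0)" by fastforce
  have IH: "finite E0 \<and> card E0 \<le> length ws \<and> length h0 \<le> length ws \<and> (\<forall>e\<in>E0. length e \<le> length ws)"
    using Cons p0 by auto
  obtain S1 g1 where a: "a = (S1, g1)" by fastforce
  have sh: "S1 \<subseteq> {[]}" "length g1 \<le> 1" using symgens_shape[of a] Cons.prems a by auto
  have "lprod (a # ws) = lmult a (E0, h0)" using p0 by (simp add: lprod_def)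
  then have E: "E = (S1 - fmult g1 ` E0) \<union> (fmult g1 ` E0 - S1)" and h: "h = fmult g1 h0"
    using Cons.prems a by (auto simp: lmult_def Let_def)
  have fS1: "finite S1" using sh(1) finite_subset by blast
  have fE0: "finite E0" using IH by blast
  have Esub: "E \<subseteq> S1 \<union> fmult g1 ` E0" using E by blast
  have fU: "finite (S1 \<union> fmult g1 ` E0)" using fS1 fE0 by blast
  have fin: "finite E" using Esub fU finite_subset by blast
  have "card E \<le> card (S1 \<union> fmult g1 ` E0)" using Esub fU by (rule card_mono[rotated])
  also have "\<dots> \<le> card S1 + card (fmult g1 ` E0)" by (rule card_Un_le)
  also have "\<dots> \<le> 1 + card E0"
  proof -
    have "card S1 \<le> card {[]::letter list}" using sh(1) by (intro card_mono) auto
    then have "card S1 \<le> 1" by simp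
    moreover have "card (fmult g1 ` E0) \<le> card E0" using IH by (simp add: card_image_le)
    ultimately show ?thesis by simp
  qed
  finally have c: "card E \<le> length (a # ws)" using IH by simp
  have lm: "length (fmult g1 x) \<le> length x + 1" for x
  proof -
    have "length (fmult g1 x) \<le> length (g1 @ x)" unfolding fmult_def by (rule len_reduce)
    then show ?thesis using sh by simp
  qed
  have "length h \<le> length (a # ws)" using h lm[of h0] IH by simp
  moreover have "\<forall>e\<in>E. length e \<le> length (a # ws)"
  proof
    fix e assume "e \<in> E"
    then have "e \<in> S1 \<or> e \<in> fmult g1 ` E0" using E by auto
    then show "length e \<le> length (a # ws)"
    proof
      assume "e \<in> S1" then show ?thesis using sh by auto
    next
      assume "e \<in> fmult g1 ` E0"
      then obtain x where "x \<in> E0" "e = fmult g1 x" by auto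
      then show ?thesis using lm[of x] IH by fastforce
    qed
  qed
  ultimately show ?case using fin c by simp
qed

lemma carrier_word:
  assumes "a \<in> lamp_carrier"
  shows "\<exists>ws. set ws \<subseteq> symgens \<and> lprod ws = a"
proof -
  obtain F h where a: "a = (F, h)" "finite F" "F \<subseteq> F2" "h \<in> F2" using assms by (auto simp: lamp_carrier_def)
  then show ?thesis using word_exists[of F h] by blast
qed

lemma wordlen_props:
  assumes "(E, h) \<in> lamp_carrier"
  shows "card E \<le> wordlen (E, h) \<and> length h \<le> wordlen (E, h) \<and> (\<forall>e\<in>E. length e \<le> wordlen (E, h))"
proof -
  obtain ws0 where "set ws0 \<subseteq> symgens" "lprod ws0 = (E, h)" using carrier_word[OF assms] by blast
  then have ex: "\<exists>n ws. length ws = n \<and> set ws \<subseteq> symgens \<and> lprod ws = (E, h)" by blast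
  obtain ws where "length ws = wordlen (E, h)" "set ws \<subseteq> symgens" "lprod ws = (E, h)"
    using LeastI_ex[OF ex] unfolding wordlen_def by blast
  then show ?thesis using word_bounds by metis
qed

lemma wordlen_le:
  assumes "set ws \<subseteq> symgens" "lprod ws = a"
  shows "wordlen a \<le> length ws"
  unfolding wordlen_def using assms by (intro Least_le) blast

lemma wordlen_upper:
  assumes "finite F" "F \<subseteq> F2" "h \<in> F2"
  shows "wordlen (F, h) \<le> (\<Sum>s\<in>F. 2 * length s + 1) + length h"
  using word_exists[OF assms] wordlen_le order_trans by metis

lemma lmult_linvw:
  "lmult (linvw (A, g)) (B, g') =
     ((fmult (finv g) ` A - fmult (finv g) ` B) \<union> (fmult (finv g) ` B - fmult (finv g) ` A),
      fmult (finv g) g')"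
  by (simp add: lmult_def linvw_def Let_def)

lemma lmult_linvw_carrier:
  assumes "(A, g) \<in> lamp_carrier" "(B, g') \<in> lamp_carrier"
  shows "lmult (linvw (A, g)) (B, g') \<in> lamp_carrier"
  using assms by (auto simp: lmult_linvw lamp_carrier_def)

lemma rconn_mem: "rconn Y d r p q \<Longrightarrow> p \<in> Y \<and> q \<in> Y"
  by (induction rule: rconn.induct) auto

lemma rconn_trans: "rconn Y d r q q' \<Longrightarrow> rconn Y d r p q \<Longrightarrow> rconn Y d r p q'"
proof (induction rule: rconn.induct)
  case (refl p) then show ?case by simp
next
  case (step q q'') then show ?case by (metis rconn.step)
qed

lemma rconn_sym:
  assumes "rconn Y d r p q" "\<And>a b. a \<in> Y \<Longrightarrow> b \<in> Y \<Longrightarrow> d a b = d b a"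
  shows "rconn Y d r q p"
  using assms(1)
proof (induction rule: rconn.induct)
  case (refl p) then show ?case by (rule rconn.refl)
next
  case (step p0 q q')
  have qY: "q \<in> Y" using rconn_mem[OF step.hyps(1)] by blast
  have "d q' q < r" using step.hyps(3) assms(2)[OF qY step.hyps(2)] by simp
  then have "rconn Y d r q' q" by (rule rconn.step[OF rconn.refl[OF step.hyps(2)] qY])
  then show ?case by (rule rconn_trans[OF step.IH])
qed

lemma rconn_mono:
  assumes "rconn Y d r p q" "Y \<subseteq> Z" shows "rconn Z d r p q"
  using assms(1)
proof (induction rule: rconn.induct)
  case (refl p) then show ?case using assms(2) by (intro rconn.refl) blast
next
  case (step p0 q0 q'')
  have "q'' \<in> Z" using step.hyps(2) assms(2) by blast
  then show ?case by (rule rconn.step[OF step.IH _ step.hyps(3)])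
qed

definition sdiff :: "'a set \<Rightarrow> 'a set \<Rightarrow> 'a set" where
  "sdiff A B = (A - B) \<union> (B - A)"

lemma image_fmult_Nil: "A \<subseteq> F2 \<Longrightarrow> fmult [] ` A = A"
proof -
  assume A: "A \<subseteq> F2"
  have "fmult [] ` A = (\<lambda>a. a) ` A" by (rule image_cong) (use A in auto)
  then show ?thesis by simp
qed

lemma ldist_flat:
  assumes "A \<subseteq> F2" "B \<subseteq> F2"
  shows "ldist (A, []) (B, []) = real (wordlen (sdiff A B, []))"
proof -
  have "fmult [] ` A = A" "fmult [] ` B = B" using assms by (simp_all add: image_fmult_Nil)
  moreover have "fmult [] [] = []" by (simp add: fmult_def)
  ultimately show ?thesis by (simp add: ldist_def lmult_linvw sdiff_def)
qed

lemma wordlen_lone: "wordlen ({}, []) = 0"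
proof -
  have "wordlen ({}, []) \<le> length ([] :: lelem list)"
    by (rule wordlen_le) (auto simp: lprod_def lone_def)
  then show ?thesis by simp
qed

lemma wordlen_flat_lower:
  assumes "finite E" "E \<subseteq> F2"
  shows "card E \<le> wordlen (E, [])"
proof -
  have "(E, []) \<in> lamp_carrier" using assms by (simp add: lamp_carrier_def F2_def)
  then show ?thesis using wordlen_props[of E "[]"] by blast
qed

lemma wordlen_single:
  assumes "s \<in> F2"
  shows "wordlen ({s}, []) \<le> 2 * length s + 1"
  using wordlen_upper[of "{s}" "[]"] assms by (simp add: F2_def)

lemma lower_core:
  fixes S :: "letter list set" and R :: nat and r :: real and n :: nat
  assumes S: "finite S" "S \<subseteq> F2" "\<forall>s\<in>S. length s \<le> R" and rR: "2*R+1 < r"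
  and cf: "control_fn lamp_carrier ldist n D"
  shows "ennreal (card S) \<le> ennreal (real n + 2) * D r"
proof (cases "D r = \<infinity>")
  case True
  then show ?thesis by (simp add: ennreal_mult_top)
next
  case False
  then obtain d where d: "D r = ennreal d" "0 \<le> d" by (cases "D r") auto
  have r0: "r > 0" using rR by linarith
  have "\<exists>U :: nat \<Rightarrow> lelem set.
        (\<forall>i\<le>n. U i \<subseteq> lamp_carrier) \<and> (\<Union>i\<le>n. U i) = lamp_carrier \<and>
        (\<forall>x\<in>lamp_carrier. \<exists>i\<le>n. {y\<in>lamp_carrier. ldist x y < r} \<subseteq> U i) \<and>
        (\<forall>i\<le>n. \<forall>p q. rconn (U i) ldist r p q \<longrightarrow> ennreal (ldist p q) \<le> D r)"
    using cf r0 unfolding control_fn_def by blast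
  then obtain U :: "nat \<Rightarrow> lelem set" where U0:
        "(\<forall>i\<le>n. U i \<subseteq> lamp_carrier) \<and> (\<Union>i\<le>n. U i) = lamp_carrier \<and>
        (\<forall>x\<in>lamp_carrier. \<exists>i\<le>n. {y\<in>lamp_carrier. ldist x y < r} \<subseteq> U i) \<and>
        (\<forall>i\<le>n. \<forall>p q. rconn (U i) ldist r p q \<longrightarrow> ennreal (ldist p q) \<le> D r)"
    by blast
  note U = conjunct1[OF U0] conjunct1[OF conjunct2[OF conjunct2[OF U0]]]
    conjunct2[OF conjunct2[OF conjunct2[OF U0]]]
  have diam: "ldist p q \<le> d" if "i \<le> n" "rconn (U i) ldist r p q" for i p q
  proof -
    have "ennreal (ldist p q) \<le> D r" using U(3) that by blast
    then have "ennreal (ldist p q) \<le> ennreal d" using d(1) by simp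
    then show ?thesis using ennreal_le_iff[OF d(2)] by simp
  qed
  define P where "P = (\<lambda>A. (A, [] :: letter list)) ` Pow S"
  have finP: "finite P" using S by (simp add: P_def)
  have PneE: "P \<noteq> {}" by (auto simp: P_def)
  have Pform: "x \<in> P \<Longrightarrow> snd x = [] \<and> fst x \<subseteq> S" for x by (auto simp: P_def)
  have Pcar: "x \<in> P \<Longrightarrow> x \<in> lamp_carrier" for x
    using S by (auto simp: P_def lamp_carrier_def F2_def intro: finite_subset)
  have ldP: "x \<in> P \<Longrightarrow> y \<in> P \<Longrightarrow> ldist x y = real (wordlen (sdiff (fst x) (fst y), []))" for x y
  proof -
    assume xy: "x \<in> P" "y \<in> P"
    have ex: "x = (fst x, [])" "y = (fst y, [])" using Pform xy by (metis prod.collapse)+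
    have "fst x \<subseteq> F2" "fst y \<subseteq> F2" using Pform xy S(2) by blast+
    then have "ldist (fst x, []) (fst y, []) = real (wordlen (sdiff (fst x) (fst y), []))"
      by (rule ldist_flat)
    then show ?thesis using ex by metis
  qed
  have ldsym: "x \<in> P \<Longrightarrow> y \<in> P \<Longrightarrow> ldist x y = ldist y x" for x y
    using ldP by (simp add: sdiff_def Un_commute)
  have hamm: "x \<in> P \<Longrightarrow> y \<in> P \<Longrightarrow> real (card (sdiff (fst x) (fst y))) \<le> ldist x y" for x y
  proof -
    assume xy: "x \<in> P" "y \<in> P"
    have "fst x \<subseteq> S" "fst y \<subseteq> S" using Pform xy by auto
    then have "sdiff (fst x) (fst y) \<subseteq> S" by (auto simp: sdiff_def)
    then have "finite (sdiff (fst x) (fst y))" "sdiff (fst x) (fst y) \<subseteq> F2"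
      using S finite_subset by auto
    then show ?thesis using wordlen_flat_lower ldP xy by simp
  qed
  define fl where "fl s x = (sdiff (fst x) {s}, snd x)" for s :: "letter list" and x :: lelem
  have flP: "x \<in> P \<Longrightarrow> s \<in> S \<Longrightarrow> fl s x \<in> P" for x s
  proof -
    assume xs: "x \<in> P" "s \<in> S"
    then obtain A where A: "x = (A, [])" "A \<subseteq> S" by (auto simp: P_def)
    then have "fl s x = (sdiff A {s}, [])" by (simp add: fl_def)
    moreover have "sdiff A {s} \<in> Pow S" using A xs by (auto simp: sdiff_def)
    ultimately show ?thesis unfolding P_def by (intro image_eqI) auto
  qed
  have flfl: "fl s (fl s x) = x" for s x by (cases x) (auto simp: fl_def sdiff_def)
  have fldist: "x \<in> P \<Longrightarrow> s \<in> S \<Longrightarrow> ldist x (fl s x) < r" for x s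
  proof -
    assume xs: "x \<in> P" "s \<in> S"
    have "sdiff (fst x) (fst (fl s x)) = {s}" by (auto simp: fl_def sdiff_def)
    then have "ldist x (fl s x) = real (wordlen ({s}, []))" using ldP xs flP by simp
    also have "\<dots> \<le> real (2 * length s + 1)" using wordlen_single S xs by (simp only: of_nat_le_iff subset_iff)
    also have "\<dots> \<le> real (2 * R + 1)" using S xs by simp
    finally show ?thesis using rR by linarith
  qed
  have self: "x \<in> lamp_carrier \<Longrightarrow> ldist x x < r" for x
  proof -
    assume "x \<in> lamp_carrier"
    then obtain A g where x: "x = (A, g)" by (cases x) blast
    have "fmult (finv g) g = []" using cancel'[of g "[]"] by (simp add: fmult_def)
    then have "lmult (linvw x) x = ({}, [])" unfolding x(1) lmult_linvw by simp
    then show ?thesis using r0 by (simp add: ldist_def wordlen_lone)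
  qed
  define c where "c x = (SOME i. i \<le> n \<and> {y\<in>lamp_carrier. ldist x y < r} \<subseteq> U i)" for x
  have c: "x \<in> P \<Longrightarrow> c x \<le> n \<and> {y\<in>lamp_carrier. ldist x y < r} \<subseteq> U (c x)" for x
  proof -
    assume "x \<in> P"
    then have "x \<in> lamp_carrier" by (rule Pcar)
    then have "\<exists>i. i \<le> n \<and> {y\<in>lamp_carrier. ldist x y < r} \<subseteq> U i" by (rule bspec[OF U(2)])
    then show ?thesis unfolding c_def by (rule someI_ex)
  qed
  have cU: "x \<in> P \<Longrightarrow> x \<in> U (c x)" for x using c self Pcar by blast
  have cflU: "x \<in> P \<Longrightarrow> s \<in> S \<Longrightarrow> fl s x \<in> U (c x)" for x s
    using c fldist Pcar flP by blast
  define rel where "rel i y z = rconn (U i \<inter> P) ldist r y z" for i y z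
  define b where "b i y = (SOME z. rel i y z)" for i y
  have relsym: "rel i y z \<Longrightarrow> rel i z y" for i y z
  proof -
    assume "rel i y z"
    then have "rconn (U i \<inter> P) ldist r y z" by (simp add: rel_def)
    moreover have "\<And>a b. a \<in> U i \<inter> P \<Longrightarrow> b \<in> U i \<inter> P \<Longrightarrow> ldist a b = ldist b a"
      using ldsym by blast
    ultimately show ?thesis unfolding rel_def by (rule rconn_sym)
  qed
  have reltrans: "rel i y z \<Longrightarrow> rel i z w \<Longrightarrow> rel i y w" for i y z w
  proof -
    assume a: "rel i y z" and b: "rel i z w"
    show ?thesis using rconn_trans[OF b[unfolded rel_def] a[unfolded rel_def]] unfolding rel_def .
  qed
  have relb: "y \<in> U i \<Longrightarrow> y \<in> P \<Longrightarrow> rel i y (b i y)" for i y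
  proof -
    assume "y \<in> U i" "y \<in> P"
    then have "rel i y y" unfolding rel_def by (intro rconn.refl) blast
    then show ?thesis unfolding b_def by (rule someI)
  qed
  have beq: "rel i y y' \<Longrightarrow> b i y = b i y'" for i y y'
  proof -
    assume yy: "rel i y y'"
    have "rel i y z = rel i y' z" for z
    proof
      assume "rel i y z" then show "rel i y' z" using reltrans[OF relsym[OF yy]] by blast
    next
      assume "rel i y' z" then show "rel i y z" using reltrans[OF yy] by blast
    qed
    then have "rel i y = rel i y'" by (rule ext)
    then show ?thesis unfolding b_def by simp
  qed
  have relP: "rel i y z \<Longrightarrow> y \<in> P \<and> z \<in> P \<and> y \<in> U i \<and> z \<in> U i" for i y z
  proof -
    assume "rel i y z"
    then have "y \<in> U i \<inter> P \<and> z \<in> U i \<inter> P" unfolding rel_def by (rule rconn_mem)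
    then show ?thesis by blast
  qed
  have reld: "i \<le> n \<Longrightarrow> rel i y z \<Longrightarrow> real (card (sdiff (fst y) (fst z))) \<le> d" for i y z
  proof -
    assume "i \<le> n" "rel i y z"
    have "rconn (U i) ldist r y z" by (rule rconn_mono[OF \<open>rel i y z\<close>[unfolded rel_def]]) blast
    then have "ldist y z \<le> d" by (rule diam[OF \<open>i \<le> n\<close>])
    moreover have "y \<in> P" "z \<in> P" using relP \<open>rel i y z\<close> by blast+
    ultimately show ?thesis using hamm[of y z] by linarith
  qed
  define I where "I i = {x \<in> P. c x = i}" for i
  have count: "real (card (I i)) * (real (card S) - d) \<le> real (card P) * d" if "i \<le> n" for i
  proof -
    define E where "E = Sigma (I i) (\<lambda>x. S - sdiff (fst x) (fst (b i x)))"
    define G where "G = Sigma (P \<inter> U i) (\<lambda>y. sdiff (fst y) (fst (b i y)))"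
    define \<phi> where "\<phi> = (\<lambda>(x, s). (fl s x, s))"
    have finI: "finite (I i)" using finP by (simp add: I_def)
    have "real (card E) = (\<Sum>x\<in>I i. real (card (S - sdiff (fst x) (fst (b i x)))))"
    proof -
      have "card E = (\<Sum>x\<in>I i. card (S - sdiff (fst x) (fst (b i x))))"
        unfolding E_def by (rule card_SigmaI[OF finI]) (blast intro: finite_Diff S(1))
      then show ?thesis by simp
    qed
    also have "\<dots> \<ge> (\<Sum>x\<in>I i. real (card S) - d)"
    proof (rule sum_mono)
      fix x assume x: "x \<in> I i"
      then have xP: "x \<in> P" and ci: "c x = i" by (auto simp: I_def)
      have "rel i x (b i x)" using relb xP cU ci by blast
      then have cd: "real (card (sdiff (fst x) (fst (b i x)))) \<le> d" using reld that by blast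
      have "b i x \<in> P" using relP \<open>rel i x (b i x)\<close> by blast
      then have "fst x \<subseteq> S" "fst (b i x) \<subseteq> S" using Pform xP by blast+
      then have "sdiff (fst x) (fst (b i x)) \<subseteq> S" by (auto simp: sdiff_def)
      then have fsd: "finite (sdiff (fst x) (fst (b i x)))" using S(1) by (rule finite_subset)
      have "card S - card (sdiff (fst x) (fst (b i x))) \<le> card (S - sdiff (fst x) (fst (b i x)))"
        by (rule diff_card_le_card_Diff[OF fsd])
      then have "real (card S) - real (card (sdiff (fst x) (fst (b i x))))
          \<le> real (card (S - sdiff (fst x) (fst (b i x))))" by linarith
      then show "real (card S) - d \<le> real (card (S - sdiff (fst x) (fst (b i x))))"
        using cd by linarith
    qed
    finally have E1: "real (card (I i)) * (real (card S) - d) \<le> real (card E)" by simp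
    have finsd: "finite (sdiff (fst y) (fst (b i y)))" if "y \<in> P \<inter> U i" for y
    proof -
      have "rel i y (b i y)" using relb that by blast
      then have "b i y \<in> P" using relP by blast
      then have "fst y \<subseteq> S" "fst (b i y) \<subseteq> S" using Pform that by blast+
      then have "sdiff (fst y) (fst (b i y)) \<subseteq> S" by (auto simp: sdiff_def)
      then show ?thesis using S(1) by (rule finite_subset)
    qed
    have finG: "finite G" unfolding G_def using finP finsd by (intro finite_SigmaI) auto
    have injphi: "inj_on \<phi> E"
    proof (rule inj_onI)
      fix u v assume "\<phi> u = \<phi> v"
      moreover obtain x s where u: "u = (x, s)" by (cases u)
      moreover obtain x' s' where v: "v = (x', s')" by (cases v)
      ultimately have e: "fl s x = fl s' x' \<and> s = s'" by (auto simp: \<phi>_def)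
      then have "s = s'" "fl s x = fl s x'" by auto
      then have "x = x'" using flfl by metis
      then show "u = v" using u v \<open>s = s'\<close> by simp
    qed
    have phiG: "\<phi> ` E \<subseteq> G"
    proof
      fix z assume "z \<in> \<phi> ` E"
      then obtain x s where xs: "x \<in> I i" "s \<in> S" "s \<notin> sdiff (fst x) (fst (b i x))"
        and z: "z = (fl s x, s)" unfolding E_def \<phi>_def by auto
      have xP: "x \<in> P" and ci: "c x = i" using xs by (auto simp: I_def)
      have yP: "fl s x \<in> P" using flP xP xs by blast
      have yU: "fl s x \<in> U i" using cflU xP xs ci by blast
      have "rel i x (fl s x)" unfolding rel_def
        using cU[OF xP] ci xP yP yU fldist[OF xP xs(2)]
        by (metis IntI rconn.refl rconn.step)
      then have "b i (fl s x) = b i x" using beq by metis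
      moreover have "s \<in> sdiff (fst (fl s x)) (fst (b i x))"
        using xs(3) by (auto simp: fl_def sdiff_def)
      ultimately show "z \<in> G" using z yP yU by (simp add: G_def)
    qed
    have "card E = card (\<phi> ` E)" using injphi by (simp add: card_image)
    also have "\<dots> \<le> card G" using phiG finG by (rule card_mono[rotated])
    finally have EG: "real (card E) \<le> real (card G)" by simp
    have "real (card G) = (\<Sum>y\<in>P \<inter> U i. real (card (sdiff (fst y) (fst (b i y)))))"
    proof -
      have "card G = (\<Sum>y\<in>P \<inter> U i. card (sdiff (fst y) (fst (b i y))))"
        unfolding G_def using finP finsd by (intro card_SigmaI) auto
      then show ?thesis by simp
    qed
    also have "\<dots> \<le> (\<Sum>y\<in>P \<inter> U i. d)"
    proof (rule sum_mono)
      fix y assume y: "y \<in> P \<inter> U i"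
      then have "rel i y (b i y)" using relb by blast
      then show "real (card (sdiff (fst y) (fst (b i y)))) \<le> d" using reld that by blast
    qed
    also have "\<dots> = real (card (P \<inter> U i)) * d" by simp
    also have "\<dots> \<le> real (card P) * d"
      using d(2) finP by (intro mult_right_mono) (auto intro: card_mono)
    finally show ?thesis using E1 EG by linarith
  qed
  have PU: "P = (\<Union>i\<in>{..n}. I i)" using c by (auto simp: I_def)
  have "card P = (\<Sum>i\<in>{..n}. card (I i))"
    unfolding PU by (rule card_UN_disjoint) (auto simp: I_def finP)
  then have "real (card P) * (real (card S) - d) = (\<Sum>i\<in>{..n}. real (card (I i)) * (real (card S) - d))"
    by (simp add: sum_distrib_right)
  also have "\<dots> \<le> (\<Sum>i\<in>{..n}. real (card P) * d)"
    by (rule sum_mono) (use count in auto)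
  also have "\<dots> = real (card P) * ((real n + 1) * d)" by simp
  finally have "real (card P) * (real (card S) - d) \<le> real (card P) * ((real n + 1) * d)" .
  moreover have "real (card P) > 0" using finP PneE by (simp add: card_gt_0_iff)
  ultimately have "real (card S) - d \<le> (real n + 1) * d" by simp
  then have "real (card S) \<le> (real n + 2) * d" by (simp add: algebra_simps)
  then have "ennreal (real (card S)) \<le> ennreal ((real n + 2) * d)" by (rule ennreal_leI)
  then show ?thesis using d by (simp add: ennreal_mult)
qed

lemma pos_reduced: "set w \<subseteq> {(GX, False), (GY, False)} \<Longrightarrow> reduced w"
proof (induction w rule: reduced.induct)
  case (3 a b w)
  then have "b \<noteq> linv a" by (auto simp: linv_def)
  then show ?case using 3 by simp
qed auto

lemma lower_bound:
  fixes n :: nat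
  assumes cf: "control_fn lamp_carrier ldist n D"
  shows "weakly_dominates D (\<lambda>t. ennreal (2 powr t))"
  unfolding weakly_dominates_def
proof (intro exI conjI allI impI)
  show "(1::real) \<le> real n + 2" by simp
  show "(0::real) \<le> 4" by simp
  fix t :: real assume t: "0 \<le> t"
  define R where "R = nat \<lfloor>t\<rfloor> + 1"
  define S where "S = {w. set w \<subseteq> {(GX, False), (GY, False)} \<and> length w = R}"
  have finS: "finite S" unfolding S_def by (rule finite_lists_length_eq) simp
  have cardS: "card S = 2 ^ R" unfolding S_def by (subst card_lists_length_eq) (auto simp: numeral_2_eq_2)
  have SF: "S \<subseteq> F2" unfolding S_def F2_def using pos_reduced by blast
  have SR: "\<forall>s\<in>S. length s \<le> R" unfolding S_def by simp
  have tR: "t \<le> real R" using t unfolding R_def by linarith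
  have rR: "real (2 * R + 1) < (real n + 2) * t + 4"
  proof -
    have "real R \<le> t + 1" unfolding R_def using t by linarith
    moreover have "2 * t \<le> (real n + 2) * t" using t by (simp add: mult_right_mono)
    ultimately show ?thesis by simp
  qed
  have "2 powr t \<le> 2 powr (real R)" using tR by simp
  also have "\<dots> = real (card S)" using cardS by (simp add: powr_realpow)
  finally have "ennreal (2 powr t) \<le> ennreal (real (card S))" by (rule ennreal_leI)
  also have "\<dots> \<le> ennreal (real n + 2) * D ((real n + 2) * t + 4)"
    by (rule lower_core[OF finS SF SR rR cf])
  also have "\<dots> \<le> ennreal (real n + 2) * D ((real n + 2) * t + 4) + ennreal 4" by simp
  finally show "ennreal (2 powr t) \<le> ennreal (real n + 2) * D ((real n + 2) * t + 4) + ennreal 4" .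
qed

definition close :: "nat \<Rightarrow> lelem \<Rightarrow> lelem \<Rightarrow> bool" where
  "close k a b \<longleftrightarrow> a \<in> lamp_carrier \<and> b \<in> lamp_carrier \<and> wordlen (lmult (linvw a) b) \<le> k - 1"

lemma ldist_close:
  assumes "a \<in> lamp_carrier" "b \<in> lamp_carrier" "ldist a b < r"
  shows "close (nat \<lceil>r\<rceil>) a b"
proof -
  have "real (wordlen (lmult (linvw a) b)) < r" using assms(3) by (simp add: ldist_def)
  then have "wordlen (lmult (linvw a) b) < nat \<lceil>r\<rceil>" by linarith
  then show ?thesis using assms by (simp add: close_def)
qed

lemma close_facts:
  assumes "close k (A, g) (B, g')"
  shows "length g' \<le> length g + (k - 1)" "length g \<le> length g' + (k - 1)"
    "take (length g - (k - 1)) g' = take (length g - (k - 1)) g"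
    "sdiff A B \<subseteq> fmult g ` {e \<in> F2. length e \<le> k - 1}"
proof -
  have car: "(A, g) \<in> lamp_carrier" "(B, g') \<in> lamp_carrier" using assms by (auto simp: close_def)
  then have AF: "A \<subseteq> F2" "B \<subseteq> F2" "g \<in> F2" "g' \<in> F2" by (auto simp: lamp_carrier_def)
  define T where "T = fmult (finv g)"
  define F where "F = (T ` A - T ` B) \<union> (T ` B - T ` A)"
  define h where "h = fmult (finv g) g'"
  have lm: "lmult (linvw (A, g)) (B, g') = (F, h)" by (simp add: lmult_linvw F_def T_def h_def)
  have wl: "wordlen (F, h) \<le> k - 1" using assms lm by (simp add: close_def)
  have "(F, h) \<in> lamp_carrier" using lmult_linvw_carrier[OF car] lm by simp
  then have wp: "length h \<le> wordlen (F, h)" "\<forall>e\<in>F. length e \<le> wordlen (F, h)"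
    using wordlen_props by blast+
  have hk: "length h \<le> k - 1" using wp wl by linarith
  note ts = tree_step[OF AF(3,4)]
  show "length g' \<le> length g + (k - 1)" using ts(2) hk unfolding h_def by linarith
  show "length g \<le> length g' + (k - 1)" using ts(3) hk unfolding h_def by linarith
  have mm: "length g - (k - 1) \<le> length g - length h" using hk by arith
  have "take (length g - (k - 1)) g' = take (length g - (k - 1)) (take (length g - length h) g')"
    using mm by (simp add: min_def)
  also have "\<dots> = take (length g - (k - 1)) (take (length g - length h) g)"
    using ts(1) unfolding h_def by simp
  also have "\<dots> = take (length g - (k - 1)) g" using mm by (simp add: min_def)
  finally show "take (length g - (k - 1)) g' = take (length g - (k - 1)) g" .
  show "sdiff A B \<subseteq> fmult g ` {e \<in> F2. length e \<le> k - 1}"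
  proof
    fix x assume x: "x \<in> sdiff A B"
    have xF: "x \<in> F2" using x AF by (auto simp: sdiff_def)
    have inj: "inj_on T F2" unfolding T_def by (rule inj_fmult)
    have "T x \<in> F"
    proof (cases "x \<in> A")
      case True
      then have "x \<notin> B" using x by (auto simp: sdiff_def)
      then have "T x \<notin> T ` B" using inj xF AF(2) by (auto simp: inj_on_def)
      then show ?thesis using True by (simp add: F_def)
    next
      case False
      then have "x \<in> B" using x by (auto simp: sdiff_def)
      moreover have "T x \<notin> T ` A" using inj xF AF(1) False by (auto simp: inj_on_def)
      ultimately show ?thesis by (simp add: F_def)
    qed
    moreover have "x = fmult g (T x)" unfolding T_def using fmult_inv_left[OF xF] by simp
    moreover have "T x \<in> F2" unfolding T_def by simp
    moreover have "length (T x) \<le> k - 1" using \<open>T x \<in> F\<close> wp wl by fastforce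
    ultimately show "x \<in> fmult g ` {e \<in> F2. length e \<le> k - 1}" by blast
  qed
qed

definition bv :: "nat \<Rightarrow> nat \<Rightarrow> lelem \<Rightarrow> nat" where
  "bv k j a = length (snd a) + (k - 1) + j * (4 * k)"

definition Uc :: "nat \<Rightarrow> nat \<Rightarrow> lelem set" where
  "Uc k j = {a \<in> lamp_carrier. j \<le> 1 \<and> bv k j a mod (8 * k) < 6 * k - 1}"

lemma mod_small_shift:
  fixes z e N :: nat
  assumes "z mod N + e < N"
  shows "(z + e) mod N = z mod N + e"
proof -
  have "z + e = (z div N) * N + (z mod N + e)" by simp
  then have "(z + e) mod N = (z mod N + e) mod N" by (metis mod_mult_self3)
  then show ?thesis using assms by simp
qed

lemma ball_cover:
  assumes k: "k \<ge> 1" and x: "x \<in> lamp_carrier"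
  shows "\<exists>j\<le>1. \<forall>y. close k x y \<longrightarrow> y \<in> Uc k j"
proof -
  obtain A g where xe: "x = (A, g)" by (cases x)
  define N where "N = 8 * k"
  have N0: "N > 0" using k by (simp add: N_def)
  obtain j where j: "j \<le> 1" "(length g + j * (4 * k)) mod N < 4 * k"
  proof (cases "length g mod N < 4 * k")
    case True
    then show ?thesis using that[of 0] by simp
  next
    case False
    have "(length g + 4 * k) mod N = (length g mod N + 4 * k) mod N" by (simp add: mod_add_left_eq)
    also have "\<dots> = length g mod N - 4 * k"
    proof -
      have lt: "length g mod N < N" using N0 by simp
      have "length g mod N + 4 * k = (length g mod N - 4 * k) + 1 * N" using False by (simp add: N_def)
      then have "(length g mod N + 4 * k) mod N = (length g mod N - 4 * k) mod N" by (metis mod_mult_self1)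
      also have "\<dots> = length g mod N - 4 * k" using lt by (simp add: N_def)
      finally show ?thesis .
    qed
    finally have eq: "(length g + 4 * k) mod N = length g mod N - 4 * k" .
    have lt: "length g mod N < N" using N0 by simp
    have "(length g + 4 * k) mod N < 4 * k" using eq lt unfolding N_def by linarith
    then have "(length g + 1 * (4 * k)) mod N < 4 * k" by simp
    then show ?thesis using that[of 1] by simp
  qed
  show ?thesis
  proof (intro exI[of _ j] conjI allI impI)
    show "j \<le> 1" by (rule j(1))
    fix y assume cl: "close k x y"
    obtain B g' where ye: "y = (B, g')" by (cases y)
    have cf: "length g' \<le> length g + (k - 1)" "length g \<le> length g' + (k - 1)"
      using close_facts[of k A g B g'] cl xe ye by auto
    define z where "z = length g + j * (4 * k)"
    define e where "e = length g' + (k - 1) - length g"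
    have e: "e \<le> 2 * (k - 1)" "bv k j y = z + e" using cf
      by (auto simp: e_def z_def bv_def ye)
    have "z mod N + e < N" using j(2) e(1) k unfolding z_def N_def by linarith
    then have "bv k j y mod N = z mod N + e" using e(2) mod_small_shift by simp
    also have "\<dots> < 6 * k - 1" using j(2) e(1) k unfolding z_def by linarith
    finally have "bv k j y mod (8 * k) < 6 * k - 1" by (simp add: N_def)
    moreover have "y \<in> lamp_carrier" using cl by (simp add: close_def)
    ultimately show "y \<in> Uc k j" using j(1) by (simp add: Uc_def)
  qed
qed

lemma band_same:
  assumes k: "k \<ge> 1" and a: "a \<in> Uc k j" and b: "b \<in> Uc k j" and cl: "close k a b"
  shows "bv k j a div (8 * k) = bv k j b div (8 * k)"
proof -
  define N where "N = 8 * k"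
  obtain A g where ae: "a = (A, g)" by (cases a)
  obtain B g' where be: "b = (B, g')" by (cases b)
  have cf: "length g' \<le> length g + (k - 1)" "length g \<le> length g' + (k - 1)"
    using close_facts[of k A g B g'] cl ae be by auto
  have d1: "bv k j b \<le> bv k j a + (k - 1)" "bv k j a \<le> bv k j b + (k - 1)"
    using cf by (auto simp: bv_def ae be)
  have ma: "bv k j a mod N < 6 * k - 1" and mb: "bv k j b mod N < 6 * k - 1"
    using a b by (auto simp: Uc_def N_def)
  have ea: "bv k j a = (bv k j a div N) * N + bv k j a mod N" by simp
  have eb: "bv k j b = (bv k j b div N) * N + bv k j b mod N" by simp
  have no: False if lt: "u div N < v div N" and mu: "u mod N < 6 * k - 1"
      and dv: "v \<le> u + (k - 1)" for u v
  proof -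
    have "Suc (u div N) \<le> v div N" using lt by simp
    then have "Suc (u div N) * N \<le> (v div N) * N" by (rule mult_le_mono1)
    then have "(u div N) * N + N \<le> (v div N) * N" by simp
    moreover have "v = (v div N) * N + v mod N" by simp
    moreover have "u = (u div N) * N + u mod N" by simp
    ultimately show False using mu dv k unfolding N_def by linarith
  qed
  show ?thesis
  proof (rule ccontr)
    assume "bv k j a div (8 * k) \<noteq> bv k j b div (8 * k)"
    then have "bv k j a div N < bv k j b div N \<or> bv k j b div N < bv k j a div N"
      unfolding N_def by linarith
    then show False using no ma mb d1 by blast
  qed
qed

definition Pof :: "nat \<Rightarrow> nat \<Rightarrow> lelem \<Rightarrow> nat" where
  "Pof k j p = 8 * k * (bv k j p div (8 * k)) - j * (4 * k) - 2 * (k - 1)"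

definition Zs :: "letter list \<Rightarrow> nat \<Rightarrow> letter list set" where
  "Zs c K = (\<lambda>v. reduce (c @ v)) ` {v. length v \<le> K}"

lemma band_len:
  assumes k: "k \<ge> 1" "j \<le> 1" and q: "q \<in> Uc k j"
    and Q: "bv k j q div (8 * k) = Qp"
  defines "P \<equiv> 8 * k * Qp - j * (4 * k) - 2 * (k - 1)"
  shows "length (snd q) \<le> P + 7 * k" "P > 0 \<Longrightarrow> P + (k - 1) \<le> length (snd q)"
proof -
  define X where "X = 8 * k * Qp"
  define m where "m = bv k j q mod (8 * k)"
  have m: "m < 6 * k - 1" using q by (simp add: Uc_def m_def)
  have e: "bv k j q = X + m" unfolding X_def m_def Q[symmetric]
    by (metis div_mult_mod_eq mult.commute)
  have e2: "length (snd q) + (k - 1) + j * (4 * k) = X + m" using e by (simp add: bv_def)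
  have PX: "P = X - j * (4 * k) - 2 * (k - 1)" by (simp add: P_def X_def)
  consider "j = 0" | "j = 1" using k(2) by linarith
  then show "length (snd q) \<le> P + 7 * k"
    by cases (use e2 PX m k in simp_all; linarith)+
  assume P0: "P > 0"
  consider "j = 0" | "j = 1" using k(2) by linarith
  then show "P + (k - 1) \<le> length (snd q)"
    by cases (use e2 PX m k P0 in simp_all; linarith)+
qed

lemma Uc_car: "Uc k j \<subseteq> lamp_carrier" by (auto simp: Uc_def)

lemma fmult_Zs:
  assumes "length (reduce (g2 @ e)) \<le> K"
  shows "fmult (c0 @ g2) e \<in> Zs c0 K"
proof -
  have "fmult (c0 @ g2) e = reduce (c0 @ reduce (g2 @ e))" by (simp add: fmult_def)
  then show ?thesis using assms unfolding Zs_def by blast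
qed

lemma comp_inv:
  assumes k: "k \<ge> 1" "j \<le> 1" and rc: "rconn (Uc k j) ldist r p q" and kr: "k = nat \<lceil>r\<rceil>"
  shows "bv k j q div (8 * k) = bv k j p div (8 * k) \<and> take (Pof k j p) (snd q) = take (Pof k j p) (snd p)
     \<and> sdiff (fst p) (fst q) \<subseteq> Zs (take (Pof k j p) (snd p)) (8 * k)"
  using rc
proof (induction rule: rconn.induct)
  case (refl p)
  then show ?case by (simp add: sdiff_def)
next
  case (step p q q')
  define P where "P = Pof k j p"
  define c0 where "c0 = take P (snd p)"
  have IH: "bv k j q div (8 * k) = bv k j p div (8 * k)" "take P (snd q) = c0"
     "sdiff (fst p) (fst q) \<subseteq> Zs c0 (8 * k)" using step.IH by (auto simp: P_def c0_def)
  have qU: "q \<in> Uc k j" using rconn_mem[OF step.hyps(1)] by blast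
  have q'U: "q' \<in> Uc k j" using step.hyps(2) .
  have cl: "close k q q'" using ldist_close[of q q' r] qU q'U Uc_car step.hyps(3) kr by blast
  obtain A g where qe: "q = (A, g)" by (cases q)
  obtain B g' where q'e: "q' = (B, g')" by (cases q')
  note cf = close_facts[OF cl[unfolded qe q'e]]
  have bands: "bv k j q' div (8 * k) = bv k j p div (8 * k)"
    using band_same[OF k(1) qU q'U cl] IH(1) by simp
  have PP: "P = 8 * k * (bv k j q div (8 * k)) - j * (4 * k) - 2 * (k - 1)"
    unfolding P_def Pof_def using IH(1) by simp
  note bl = band_len[OF k qU HOL.refl, folded PP]
  have pref: "take P g' = c0"
  proof (cases "P = 0")
    case True
    then show ?thesis using IH(2) by simp
  next
    case False
    then have "P \<le> length g - (k - 1)" using bl(2) qe by simp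
    then have "take P g' = take P (take (length g - (k - 1)) g')" by (simp add: min_def)
    also have "\<dots> = take P (take (length g - (k - 1)) g)" using cf(3) by simp
    also have "\<dots> = take P g" using \<open>P \<le> length g - (k - 1)\<close> by (simp add: min_def)
    finally show ?thesis using IH(2) qe by simp
  qed
  have lamps: "sdiff A B \<subseteq> Zs c0 (8 * k)"
  proof
    fix x assume "x \<in> sdiff A B"
    then obtain e where e: "e \<in> F2" "length e \<le> k - 1" "x = fmult g e" using cf(4) by blast
    define g2 where "g2 = drop P g"
    have "take P g = c0" using IH(2) qe by simp
    then have gsplit: "g = c0 @ g2" unfolding g2_def by (metis append_take_drop_id)
    have "length g2 \<le> 7 * k" using bl(1) qe unfolding g2_def by simp
    then have "length (reduce (g2 @ e)) \<le> 8 * k"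
      using len_reduce[of "g2 @ e"] e(2) k by simp
    then show "x \<in> Zs c0 (8 * k)" using fmult_Zs e(3) gsplit by metis
  qed
  have "sdiff (fst p) (fst q') \<subseteq> sdiff (fst p) (fst q) \<union> sdiff (fst q) (fst q')"
    by (auto simp: sdiff_def)
  then have "sdiff (fst p) (fst q') \<subseteq> Zs c0 (8 * k)" using IH(3) lamps qe q'e by auto
  then show ?case using bands pref q'e by (simp add: P_def c0_def)
qed

lemma UNIV_gen: "(UNIV :: gen set) = {GX, GY}"
  using gen.exhaust by auto

lemma card_letter: "card (UNIV :: letter set) = 4" and fin_letter: "finite (UNIV :: letter set)"
proof -
  have u: "(UNIV :: letter set) = UNIV \<times> UNIV" by simp
  show "finite (UNIV :: letter set)" unfolding u UNIV_gen by simp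
  show "card (UNIV :: letter set) = 4" unfolding u UNIV_gen by (simp add: card_cartesian_product)
qed

lemma geom4: "(\<Sum>i\<le>K. (4::nat) ^ i) \<le> 4 ^ (K + 1)"
  by (induction K) auto

lemma card_short: "card {v :: letter list. length v \<le> K} \<le> 4 ^ (K + 1)"
  and fin_short: "finite {v :: letter list. length v \<le> K}"
proof -
  have e: "{v :: letter list. length v \<le> K} = {v. set v \<subseteq> UNIV \<and> length v \<le> K}" by simp
  show "card {v :: letter list. length v \<le> K} \<le> 4 ^ (K + 1)"
    unfolding e card_lists_length_le[OF fin_letter] card_letter by (rule geom4)
  show "finite {v :: letter list. length v \<le> K}"
    unfolding e by (rule finite_lists_length_le[OF fin_letter])
qed

lemma inv_len:
  "length (fmult (finv (c0 @ g2)) (reduce (c0 @ v))) \<le> length g2 + length v"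
proof -
  have "fmult (finv (c0 @ g2)) (reduce (c0 @ v)) = reduce ((finv g2 @ finv c0) @ reduce (c0 @ v))"
    by (simp add: fmult_def)
  also have "\<dots> = reduce ((finv g2 @ finv c0) @ c0 @ v)" by (rule reduce_append_reduce)
  also have "\<dots> = reduce (finv g2 @ reduce (finv c0 @ c0 @ v))" by simp
  also have "\<dots> = reduce (finv g2 @ v)" by (simp add: cancel')
  finally have "fmult (finv (c0 @ g2)) (reduce (c0 @ v)) = reduce (finv g2 @ v)" .
  moreover have "length (reduce (finv g2 @ v)) \<le> length g2 + length v"
    using len_reduce[of "finv g2 @ v"] by simp
  ultimately show ?thesis by simp
qed

lemma comp_diam:
  assumes k: "k \<ge> 1" "j \<le> 1" and rc: "rconn (Uc k j) ldist r p q" and kr: "k = nat \<lceil>r\<rceil>"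
  shows "wordlen (lmult (linvw p) q) \<le> 4 ^ (8 * k + 1) * (30 * k + 1) + 14 * k"
proof -
  obtain A gp where pe: "p = (A, gp)" by (cases p)
  obtain B gq where qe: "q = (B, gq)" by (cases q)
  define P where "P = Pof k j p"
  define c0 where "c0 = take P gp"
  have ci: "bv k j q div (8 * k) = bv k j p div (8 * k)" "take P gq = c0"
    "sdiff A B \<subseteq> Zs c0 (8 * k)"
    using comp_inv[OF k rc kr] pe qe by (auto simp: P_def c0_def)
  have pU: "p \<in> Uc k j" and qU: "q \<in> Uc k j" using rconn_mem[OF rc] by auto
  have car: "p \<in> lamp_carrier" "q \<in> lamp_carrier" using pU qU Uc_car by auto
  then have AB: "finite A" "finite B" "A \<subseteq> F2" "B \<subseteq> F2" "gp \<in> F2" "gq \<in> F2"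
    using pe qe by (auto simp: lamp_carrier_def)
  have lp: "length gp \<le> P + 7 * k"
    using band_len(1)[OF k pU HOL.refl] pe by (simp add: P_def Pof_def)
  have lq: "length gq \<le> P + 7 * k"
    using band_len(1)[OF k qU ci(1)] qe by (simp add: P_def Pof_def)
  define g2p where "g2p = drop P gp"
  define g2q where "g2q = drop P gq"
  have sp: "gp = c0 @ g2p" unfolding g2p_def c0_def by simp
  have sq: "gq = c0 @ g2q" unfolding g2q_def using ci(2) by (metis append_take_drop_id)
  have l2p: "length g2p \<le> 7 * k" using lp unfolding g2p_def by simp
  have l2q: "length g2q \<le> 7 * k" using lq unfolding g2q_def by simp
  define T where "T = fmult (finv gp)"
  define F where "F = (T ` A - T ` B) \<union> (T ` B - T ` A)"
  define h where "h = T gq"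
  have lm: "lmult (linvw p) q = (F, h)"
    unfolding pe qe by (simp add: lmult_linvw F_def T_def h_def)
  have FT: "F \<subseteq> T ` sdiff A B" unfolding F_def sdiff_def by blast
  have finAB: "finite (sdiff A B)" using AB by (simp add: sdiff_def)
  have finF: "finite F" using FT finAB finite_surj by blast
  have FF2: "F \<subseteq> F2" unfolding F_def T_def by auto
  have hF2: "h \<in> F2" unfolding h_def T_def by simp
  have cardF: "card F \<le> 4 ^ (8 * k + 1)"
  proof -
    have "card F \<le> card (T ` sdiff A B)" using FT finAB by (intro card_mono) auto
    also have "\<dots> \<le> card (sdiff A B)" using finAB by (rule card_image_le)
    also have "\<dots> \<le> card (Zs c0 (8 * k))"
      using ci(3) by (intro card_mono) (auto simp: Zs_def intro: fin_short)
    also have "\<dots> \<le> card {v :: letter list. length v \<le> 8 * k}"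
      unfolding Zs_def using fin_short by (rule card_image_le)
    also have "\<dots> \<le> 4 ^ (8 * k + 1)" by (rule card_short)
    finally show ?thesis .
  qed
  have lenF: "length s \<le> 15 * k" if sF: "s \<in> F" for s
  proof -
    obtain z where z: "z \<in> sdiff A B" "s = T z" using FT sF by blast
    then obtain v where v: "length v \<le> 8 * k" "z = reduce (c0 @ v)" using ci(3) by (auto simp: Zs_def)
    have "length s \<le> length g2p + length v" unfolding z(2) v(2) T_def sp by (rule inv_len)
    then show ?thesis using l2p v(1) by simp
  qed
  have lenh: "length h \<le> 14 * k"
  proof -
    have "gq = reduce (c0 @ g2q)" using AB(6) sq by (simp add: F2_def reduce_reduced)
    then have "length h \<le> length g2p + length g2q" unfolding h_def T_def sp
      by (metis inv_len)
    then show ?thesis using l2p l2q by simp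
  qed
  have "wordlen (lmult (linvw p) q) = wordlen (F, h)" using lm by simp
  also have "\<dots> \<le> (\<Sum>s\<in>F. 2 * length s + 1) + length h" by (rule wordlen_upper[OF finF FF2 hF2])
  also have "(\<Sum>s\<in>F. 2 * length s + 1) \<le> (\<Sum>s\<in>F. 30 * k + 1)"
    by (rule sum_mono) (use lenF in fastforce)
  also have "\<dots> = card F * (30 * k + 1)" by simp
  also have "\<dots> \<le> 4 ^ (8 * k + 1) * (30 * k + 1)" using cardF by (rule mult_right_mono) simp
  finally show ?thesis using lenh by linarith
qed

lemma numbound: "4 ^ (8 * k + 1) * (30 * k + 1) + 14 * k \<le> (2::nat) ^ (24 * k + 10)"
proof -
  have a: "(4::nat) ^ (8 * k + 1) = 2 ^ (16 * k + 2)"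
  proof -
    have "(4::nat) ^ (8 * k + 1) = (2 ^ 2) ^ (8 * k + 1)" by simp
    also have "\<dots> = 2 ^ (2 * (8 * k + 1))" by (rule power_mult[symmetric])
    finally show ?thesis by simp
  qed
  have b: "k < 2 ^ k" by (rule less_exp)
  have c: "(2::nat) ^ k \<le> 2 ^ (8 * k)" by (rule power_increasing) simp_all
  have d: "44 * k + 1 \<le> (2::nat) ^ (8 * k + 8)"
  proof -
    have "44 * k + 1 \<le> 45 * (2::nat) ^ (8 * k)" using b c by linarith
    also have "\<dots> \<le> 256 * 2 ^ (8 * k)" by simp
    also have "\<dots> = 2 ^ (8 * k + 8)" by (simp add: power_add)
    finally show ?thesis .
  qed
  define X where "X = (2::nat) ^ (16 * k + 2)"
  have X1: "1 \<le> X" unfolding X_def by simp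
  have "4 ^ (8 * k + 1) * (30 * k + 1) + 14 * k = X * (30 * k + 1) + 14 * k" using a X_def by simp
  also have "\<dots> \<le> X * (30 * k + 1) + X * (14 * k)" using X1 by simp
  also have "\<dots> = X * (44 * k + 1)" by (simp add: algebra_simps)
  also have "\<dots> \<le> X * 2 ^ (8 * k + 8)" using d by (rule mult_left_mono) simp
  also have "\<dots> = 2 ^ ((16 * k + 2) + (8 * k + 8))" unfolding X_def by (rule power_add[symmetric])
  also have "(16 * k + 2) + (8 * k + 8) = 24 * k + 10" by simp
  finally show ?thesis .
qed

lemma close_self:
  assumes "x \<in> lamp_carrier" shows "close k x x"
proof -
  obtain A g where x: "x = (A, g)" by (cases x)
  have "fmult (finv g) g = []" using cancel'[of g "[]"] by (simp add: fmult_def)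
  then have "lmult (linvw x) x = ({}, [])" unfolding x lmult_linvw by simp
  then show ?thesis using assms by (simp add: close_def wordlen_lone)
qed

definition Dup :: "real \<Rightarrow> ennreal" where
  "Dup r = ennreal (2 ^ (24 * nat \<lceil>r\<rceil> + 10))"

lemma upper_cf:
  assumes n: "n \<ge> 1"
  shows "control_fn lamp_carrier ldist n Dup"
  unfolding control_fn_def
proof (intro allI impI)
  fix r :: real assume r: "r > 0"
  define k where "k = nat \<lceil>r\<rceil>"
  have k1: "k \<ge> 1" using r unfolding k_def by linarith
  show "\<exists>U. (\<forall>i\<le>n. U i \<subseteq> lamp_carrier) \<and> (\<Union>i\<le>n. U i) = lamp_carrier \<and>
        (\<forall>x\<in>lamp_carrier. \<exists>i\<le>n. {y \<in> lamp_carrier. ldist x y < r} \<subseteq> U i) \<and>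
        (\<forall>i\<le>n. \<forall>p q. rconn (U i) ldist r p q \<longrightarrow> ennreal (ldist p q) \<le> Dup r)"
  proof (intro exI[of _ "Uc k"] conjI)
    show "\<forall>i\<le>n. Uc k i \<subseteq> lamp_carrier" using Uc_car by blast
    show "(\<Union>i\<le>n. Uc k i) = lamp_carrier"
    proof
      show "(\<Union>i\<le>n. Uc k i) \<subseteq> lamp_carrier" using Uc_car by blast
      show "lamp_carrier \<subseteq> (\<Union>i\<le>n. Uc k i)"
      proof
        fix x assume x: "x \<in> lamp_carrier"
        obtain j where j: "j \<le> 1" "\<forall>y. close k x y \<longrightarrow> y \<in> Uc k j" using ball_cover[OF k1 x] by blast
        then have "x \<in> Uc k j" using close_self[OF x] by blast
        moreover have "j \<le> n" using j n by linarith
        ultimately show "x \<in> (\<Union>i\<le>n. Uc k i)" by blast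
      qed
    qed
    show "\<forall>x\<in>lamp_carrier. \<exists>i\<le>n. {y \<in> lamp_carrier. ldist x y < r} \<subseteq> Uc k i"
    proof
      fix x assume x: "x \<in> lamp_carrier"
      obtain j where j: "j \<le> 1" "\<forall>y. close k x y \<longrightarrow> y \<in> Uc k j" using ball_cover[OF k1 x] by blast
      have "{y \<in> lamp_carrier. ldist x y < r} \<subseteq> Uc k j"
      proof
        fix y assume "y \<in> {y \<in> lamp_carrier. ldist x y < r}"
        then have "close k x y" using ldist_close[OF x] unfolding k_def by blast
        then show "y \<in> Uc k j" using j by blast
      qed
      moreover have "j \<le> n" using j n by linarith
      ultimately show "\<exists>i\<le>n. {y \<in> lamp_carrier. ldist x y < r} \<subseteq> Uc k i" by blast
    qed
    show "\<forall>i\<le>n. \<forall>p q. rconn (Uc k i) ldist r p q \<longrightarrow> ennreal (ldist p q) \<le> Dup r"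
    proof (intro allI impI)
      fix i p q assume "i \<le> n" and rc: "rconn (Uc k i) ldist r p q"
      have "p \<in> Uc k i" using rconn_mem[OF rc] by blast
      then have i1: "i \<le> 1" by (simp add: Uc_def)
      have "wordlen (lmult (linvw p) q) \<le> 4 ^ (8 * k + 1) * (30 * k + 1) + 14 * k"
        using comp_diam[OF k1 i1 rc] k_def by blast
      also have "\<dots> \<le> 2 ^ (24 * k + 10)" by (rule numbound)
      finally have "real (wordlen (lmult (linvw p) q)) \<le> real ((2::nat) ^ (24 * k + 10))"
        by (simp only: of_nat_le_iff)
      then have "ldist p q \<le> 2 ^ (24 * k + 10)" by (simp add: ldist_def)
      then show "ennreal (ldist p q) \<le> Dup r" unfolding Dup_def k_def by (rule ennreal_leI)
    qed
  qed
qed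

lemma upper_dom: "weakly_dominates (\<lambda>t. ennreal (2 powr t)) Dup"
  unfolding weakly_dominates_def
proof (rule exI[of _ "24::real"], intro conjI exI[of _ "34::real"] allI impI)
  show "(1::real) \<le> 24" by simp
  show "(0::real) \<le> 34" by simp
  fix t :: real assume t: "0 \<le> t"
  define k where "k = nat \<lceil>t\<rceil>"
  have kt: "real k \<le> t + 1" unfolding k_def using t by linarith
  have "(2::real) ^ (24 * k + 10) = 2 powr (real (24 * k + 10))" by (rule powr_realpow[symmetric]) simp
  also have "\<dots> \<le> 2 powr (24 * t + 34)" using kt by (intro powr_mono) auto
  also have "\<dots> \<le> 24 * 2 powr (24 * t + 34) + 34" by simp
  finally have "ennreal (2 ^ (24 * k + 10)) \<le> ennreal (24 * 2 powr (24 * t + 34) + 34)"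
    by (rule ennreal_leI)
  also have "\<dots> = ennreal 24 * ennreal (2 powr (24 * t + 34)) + ennreal 34"
    by (simp add: ennreal_plus ennreal_mult)
  finally show "Dup t \<le> ennreal 24 * ennreal (2 powr (24 * t + 34)) + ennreal 34"
    unfolding Dup_def k_def .
qed

theorem corollary4p7:
  fixes n :: nat
  assumes "n \<ge> 1"
  shows "(\<exists>D. control_fn lamp_carrier ldist n D \<and>
              weakly_dominates (\<lambda>t. ennreal (2 powr t)) D) \<and>
         (\<forall>D. control_fn lamp_carrier ldist n D \<longrightarrow>
              weakly_dominates D (\<lambda>t. ennreal (2 powr t)))"
  using upper_cf[OF assms] upper_dom lower_bound by blast

end
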